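(* Let $X$ be a connected vertex-transitive cubic graph containing a cycle of length $3$. Then $1$ is a simple eigenvalue of $X$ if and only if $X\cong T(G)$ for some connected, bipartite, arc-transitive cubic multigraph $G$.
   Context: The truncation $T(G)$ of a cubic multigraph $G$ is the cubic graph obtained by replacing every vertex $v$ of $G$ by a triangle whose three vertices correspond to the three edge-ends at $v$, each edge $uv$ of $G$ giving an edge between the corresponding vertices of the triangles of $u$ and $v$. Eigenvalues are those of the adjacency matrix; simple means a $1$-dimensional eigenspace. *)

theory Defs
  imports "HOL-Analysis.Analysis"
begin

definition simple_graph :: "('a \<Rightarrow> 'a \<Rightarrow> bool) \<Rightarrow> bool" where
  "simple_graph E \<longleftrightarrow> (\<forall>u v. E u v \<longrightarrow> E v u) \<and> (\<forall>v. \<not> E v v)"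

definition cubic_graph :: "('a \<Rightarrow> 'a \<Rightarrow> bool) \<Rightarrow> bool" where
  "cubic_graph E \<longleftrightarrow> simple_graph E \<and> (\<forall>v. card {u. E v u} = 3)"

definition connected_graph :: "('a \<Rightarrow> 'a \<Rightarrow> bool) \<Rightarrow> bool" where
  "connected_graph E \<longleftrightarrow> (\<forall>u v. E\<^sup>*\<^sup>* u v)"

definition graph_automorphism :: "('a \<Rightarrow> 'a \<Rightarrow> bool) \<Rightarrow> ('a \<Rightarrow> 'a) \<Rightarrow> bool" where
  "graph_automorphism E f \<longleftrightarrow> bij f \<and> (\<forall>x y. E x y \<longleftrightarrow> E (f x) (f y))"

definition vertex_transitive :: "('a \<Rightarrow> 'a \<Rightarrow> bool) \<Rightarrow> bool" where
  "vertex_transitive E \<longleftrightarrow> (\<forall>u v. \<exists>f. graph_automorphism E f \<and> f u = v)"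

definition has_triangle :: "('a \<Rightarrow> 'a \<Rightarrow> bool) \<Rightarrow> bool" where
  "has_triangle E \<longleftrightarrow> (\<exists>a b c. a \<noteq> b \<and> b \<noteq> c \<and> a \<noteq> c \<and> E a b \<and> E b c \<and> E c a)"

definition adj_matrix :: "('a::finite \<Rightarrow> 'a \<Rightarrow> bool) \<Rightarrow> real^'a^'a" where
  "adj_matrix E = (\<chi> i j. if E i j then 1 else 0)"

definition eigenspace :: "real^'n^'n \<Rightarrow> real \<Rightarrow> (real^'n) set" where
  "eigenspace A c = {x. A *v x = c *\<^sub>R x}"

definition simple_eigenvalue :: "real^'n^'n \<Rightarrow> real \<Rightarrow> bool" where
  "simple_eigenvalue A c \<longleftrightarrow> dim (eigenspace A c) = 1"

text \<open>A multigraph G is given by a finite vertex set VG, a finite set D of darts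
(arcs = edge-ends), a map vert sending a dart to its initial vertex, and a
fixed-point-free involution rv on D reversing darts. Edges are the orbits
{d, rv d}; parallel edges and loops (vert d = vert (rv d)) are allowed.\<close>

definition cubic_multigraph ::
  "nat set \<Rightarrow> nat set \<Rightarrow> (nat \<Rightarrow> nat) \<Rightarrow> (nat \<Rightarrow> nat) \<Rightarrow> bool" where
  "cubic_multigraph VG D vert rv \<longleftrightarrow>
     finite VG \<and> finite D \<and>
     (\<forall>d\<in>D. vert d \<in> VG \<and> rv d \<in> D \<and> rv (rv d) = d \<and> rv d \<noteq> d) \<and>
     (\<forall>v\<in>VG. card {d\<in>D. vert d = v} = 3)"

definition mg_adj :: "nat set \<Rightarrow> (nat \<Rightarrow> nat) \<Rightarrow> (nat \<Rightarrow> nat) \<Rightarrow> nat \<Rightarrow> nat \<Rightarrow> bool" where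
  "mg_adj D vert rv u v \<longleftrightarrow> (\<exists>d\<in>D. vert d = u \<and> vert (rv d) = v)"

definition mg_connected ::
  "nat set \<Rightarrow> nat set \<Rightarrow> (nat \<Rightarrow> nat) \<Rightarrow> (nat \<Rightarrow> nat) \<Rightarrow> bool" where
  "mg_connected VG D vert rv \<longleftrightarrow> (\<forall>u\<in>VG. \<forall>v\<in>VG. (mg_adj D vert rv)\<^sup>*\<^sup>* u v)"

definition mg_bipartite ::
  "nat set \<Rightarrow> nat set \<Rightarrow> (nat \<Rightarrow> nat) \<Rightarrow> (nat \<Rightarrow> nat) \<Rightarrow> bool" where
  "mg_bipartite VG D vert rv \<longleftrightarrow>
     (\<exists>c :: nat \<Rightarrow> bool. \<forall>d\<in>D. c (vert d) \<noteq> c (vert (rv d)))"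

definition mg_automorphism ::
  "nat set \<Rightarrow> nat set \<Rightarrow> (nat \<Rightarrow> nat) \<Rightarrow> (nat \<Rightarrow> nat) \<Rightarrow> (nat \<Rightarrow> nat) \<Rightarrow> (nat \<Rightarrow> nat) \<Rightarrow> bool" where
  "mg_automorphism VG D vert rv \<phi> \<psi> \<longleftrightarrow>
     bij_betw \<phi> VG VG \<and> bij_betw \<psi> D D \<and>
     (\<forall>d\<in>D. vert (\<psi> d) = \<phi> (vert d) \<and> \<psi> (rv d) = rv (\<psi> d))"

definition mg_arc_transitive ::
  "nat set \<Rightarrow> nat set \<Rightarrow> (nat \<Rightarrow> nat) \<Rightarrow> (nat \<Rightarrow> nat) \<Rightarrow> bool" where
  "mg_arc_transitive VG D vert rv \<longleftrightarrow>
     (\<forall>d\<in>D. \<forall>d'\<in>D. \<exists>\<phi> \<psi>. mg_automorphism VG D vert rv \<phi> \<psi> \<and> \<psi> d = d')"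

text \<open>Truncation T(G): its vertices are the darts of G (the edge-ends); the three
darts at a vertex form a triangle, and each dart d is joined to its reverse rv d.\<close>
definition trunc_adj :: "nat set \<Rightarrow> (nat \<Rightarrow> nat) \<Rightarrow> (nat \<Rightarrow> nat) \<Rightarrow> nat \<Rightarrow> nat \<Rightarrow> bool" where
  "trunc_adj D vert rv d d' \<longleftrightarrow>
     d \<in> D \<and> d' \<in> D \<and> ((d \<noteq> d' \<and> vert d = vert d') \<or> d' = rv d)"

definition iso_to_truncation ::
  "('a \<Rightarrow> 'a \<Rightarrow> bool) \<Rightarrow> nat set \<Rightarrow> (nat \<Rightarrow> nat) \<Rightarrow> (nat \<Rightarrow> nat) \<Rightarrow> bool" where
  "iso_to_truncation E D vert rv \<longleftrightarrow>
     (\<exists>f. bij_betw f UNIV D \<and> (\<forall>x y. E x y \<longleftrightarrow> trunc_adj D vert rv (f x) (f y)))"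

end

theory Submission
  imports Defs
begin

lemma key:
  fixes y S :: "nat \<Rightarrow> real"
  assumes cm: "cubic_multigraph VG D vert rv"
    and ll: "\<forall>d\<in>D. vert (rv d) \<noteq> vert d"
    and eq: "\<forall>d\<in>D. S (vert d) - y d + y (rv d) = y d"
    and Sdef: "\<And>v. S v = (\<Sum>d\<in>{d\<in>D. vert d = v}. y d)"
  shows "\<forall>d\<in>D. S (vert (rv d)) = - S (vert d)" "\<forall>d\<in>D. y d = S (vert d) / 3"
proof -
  have fD: "finite D" and fV: "finite VG" and dD: "\<And>d. d \<in> D \<Longrightarrow> vert d \<in> VG \<and> rv d \<in> D \<and> rv (rv d) = d \<and> rv d \<noteq> d"
    and c3: "\<And>v. v \<in> VG \<Longrightarrow> card {d\<in>D. vert d = v} = 3"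
    using cm unfolding cubic_multigraph_def by auto
  have h1: "3 * y d = 2 * S (vert d) + S (vert (rv d))" if "d \<in> D" for d
  proof -
    have "S (vert d) - y d + y (rv d) = y d" using eq that by auto
    moreover have "S (vert (rv d)) - y (rv d) + y d = y (rv d)" using eq dD[OF that] by auto
    ultimately show ?thesis by linarith
  qed
  have h1': "S (vert (rv d)) = 3 * y d - 2 * S (vert d)" if "d \<in> D" for d using h1[OF that] by linarith
  define P where "P = (\<Sum>v\<in>VG. S v ^ 2)"
  have img: "vert ` D \<subseteq> VG" using dD by auto
  have A1: "(\<Sum>d\<in>D. S (vert d) ^ 2) = 3 * P"
  proof -
    have "(\<Sum>d\<in>D. S (vert d) ^ 2) = (\<Sum>v\<in>VG. \<Sum>d\<in>{d\<in>D. vert d = v}. S (vert d) ^ 2)"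
      using sum.group[OF fD fV img, of "\<lambda>d. S (vert d) ^ 2"] by simp
    also have "\<dots> = (\<Sum>v\<in>VG. 3 * S v ^ 2)"
    proof (rule sum.cong)
      fix v assume v: "v \<in> VG"
      have "(\<Sum>d\<in>{d\<in>D. vert d = v}. S (vert d) ^ 2) = (\<Sum>d\<in>{d\<in>D. vert d = v}. S v ^ 2)"
        by (rule sum.cong) auto
      also have "\<dots> = 3 * S v ^ 2" using c3[OF v] by simp
      finally show "(\<Sum>d\<in>{d\<in>D. vert d = v}. S (vert d) ^ 2) = 3 * S v ^ 2" .
    qed simp
    finally show ?thesis unfolding P_def by (simp add: sum_distrib_left)
  qed
  have A2: "(\<Sum>d\<in>D. S (vert (rv d)) ^ 2) = (\<Sum>d\<in>D. S (vert d) ^ 2)"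
    by (rule sum.reindex_bij_witness[of _ rv rv]) (auto dest: dD)
  have A3: "(\<Sum>d\<in>D. S (vert d) * S (vert (rv d))) = - 3 * P"
  proof -
    have "(\<Sum>d\<in>D. S (vert d) * S (vert (rv d))) = (\<Sum>v\<in>VG. \<Sum>d\<in>{d\<in>D. vert d = v}. S (vert d) * S (vert (rv d)))"
      using sum.group[OF fD fV img, of "\<lambda>d. S (vert d) * S (vert (rv d))"] by simp
    also have "\<dots> = (\<Sum>v\<in>VG. - 3 * S v ^ 2)"
    proof (rule sum.cong)
      fix v assume v: "v \<in> VG"
      have "(\<Sum>d\<in>{d\<in>D. vert d = v}. S (vert d) * S (vert (rv d))) = (\<Sum>d\<in>{d\<in>D. vert d = v}. S v * (3 * y d - 2 * S v))"
        by (rule sum.cong) (auto simp: h1')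
      also have "\<dots> = S v * (3 * (\<Sum>d\<in>{d\<in>D. vert d = v}. y d) - 2 * S v * card {d\<in>D. vert d = v})"
        by (simp add: sum_distrib_left sum_subtractf sum_distrib_right algebra_simps)
      also have "\<dots> = - 3 * S v ^ 2" using c3[OF v] Sdef[of v] by (simp add: power2_eq_square)
      finally show "(\<Sum>d\<in>{d\<in>D. vert d = v}. S (vert d) * S (vert (rv d))) = - 3 * S v ^ 2" .
    qed simp
    finally show ?thesis unfolding P_def by (simp add: sum_distrib_left)
  qed
  have "(\<Sum>d\<in>D. (S (vert d) + S (vert (rv d))) ^ 2) =
        (\<Sum>d\<in>D. S (vert d) ^ 2) + 2 * (\<Sum>d\<in>D. S (vert d) * S (vert (rv d))) + (\<Sum>d\<in>D. S (vert (rv d)) ^ 2)"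
    by (simp add: power2_sum sum.distrib sum_distrib_left algebra_simps)
  also have "\<dots> = 0" using A1 A2 A3 by simp
  finally have "\<forall>d\<in>D. (S (vert d) + S (vert (rv d))) ^ 2 = 0"
    using sum_nonneg_eq_0_iff[OF fD, of "\<lambda>d. (S (vert d) + S (vert (rv d))) ^ 2"] by simp
  then show anti: "\<forall>d\<in>D. S (vert (rv d)) = - S (vert d)" by (simp add: add_eq_0_iff2)
  show "\<forall>d\<in>D. y d = S (vert d) / 3" using h1 anti by fastforce
qed


lemma eig_char:
  fixes E :: "'a::finite \<Rightarrow> 'a \<Rightarrow> bool" and x :: "real^'a"
  assumes cm: "cubic_multigraph VG D vert rv"
    and ll: "\<forall>d\<in>D. vert (rv d) \<noteq> vert d"
    and f: "bij_betw f UNIV D"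
    and iso: "\<forall>x y. E x y \<longleftrightarrow> trunc_adj D vert rv (f x) (f y)"
  shows "x \<in> eigenspace (adj_matrix E) 1 \<longleftrightarrow>
    (\<forall>d\<in>D. (\<Sum>d'\<in>{d'\<in>D. vert d' = vert d}. x $ inv_into UNIV f d') - x $ inv_into UNIV f d
        + x $ inv_into UNIV f (rv d) = x $ inv_into UNIV f d)"
proof -
  let ?h = "inv_into UNIV f"
  let ?y = "\<lambda>d. x $ ?h d"
  have fD: "finite D" and dD: "\<And>d. d \<in> D \<Longrightarrow> vert d \<in> VG \<and> rv d \<in> D \<and> rv (rv d) = d \<and> rv d \<noteq> d"
    using cm unfolding cubic_multigraph_def by auto
  have injf: "inj f" using f bij_betw_def by blast
  have fD': "f i \<in> D" for i using f bij_betwE by blast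
  have hf: "?h (f i) = i" for i using injf by simp
  have row: "(adj_matrix E *v x) $ i = (\<Sum>j\<in>{j. E i j}. x $ j)" for i
  proof -
    have "(adj_matrix E *v x) $ i = (\<Sum>j\<in>UNIV. (if E i j then 1 else 0) * x $ j)"
      by (simp add: matrix_vector_mult_def adj_matrix_def)
    also have "\<dots> = (\<Sum>j\<in>UNIV. if E i j then x $ j else 0)" by (rule sum.cong) auto
    also have "\<dots> = (\<Sum>j\<in>{j. E i j}. x $ j)" by (simp add: sum.If_cases)
    finally show ?thesis .
  qed
  have nb: "(\<Sum>j\<in>{j. E i j}. x $ j) = (\<Sum>d'\<in>{d'\<in>D. vert d' = vert (f i)}. ?y d') - ?y (f i) + ?y (rv (f i))" for i
  proof -
    let ?d = "f i"
    have dD0: "?d \<in> D" by (rule fD')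
    have img: "f ` {j. E i j} = ({d'\<in>D. vert d' = vert ?d} - {?d}) \<union> {rv ?d}"
    proof
      show "f ` {j. E i j} \<subseteq> ({d'\<in>D. vert d' = vert ?d} - {?d}) \<union> {rv ?d}"
      proof
        fix d' assume "d' \<in> f ` {j. E i j}"
        then obtain j where "E i j" "d' = f j" by blast
        then have "trunc_adj D vert rv ?d d'" using iso by simp
        then show "d' \<in> ({d'\<in>D. vert d' = vert ?d} - {?d}) \<union> {rv ?d}" unfolding trunc_adj_def by auto
      qed
    next
      show "({d'\<in>D. vert d' = vert ?d} - {?d}) \<union> {rv ?d} \<subseteq> f ` {j. E i j}"
      proof
        fix d' assume d': "d' \<in> ({d'\<in>D. vert d' = vert ?d} - {?d}) \<union> {rv ?d}"
        then have d'D: "d' \<in> D" using dD[OF dD0] by auto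
        then obtain j where j: "d' = f j" using f by (metis bij_betw_def imageE)
        have "trunc_adj D vert rv ?d d'" using d' d'D dD0 unfolding trunc_adj_def by auto
        then have "E i j" using iso j by simp
        then show "d' \<in> f ` {j. E i j}" using j by blast
      qed
    qed
    have "(\<Sum>j\<in>{j. E i j}. x $ j) = (\<Sum>j\<in>{j. E i j}. ?y (f j))" by (simp add: hf)
    also have "\<dots> = (\<Sum>d'\<in>f ` {j. E i j}. ?y d')"
      by (rule sum.reindex[symmetric, unfolded comp_def]) (meson injf inj_on_subset subset_UNIV)
    also have "\<dots> = (\<Sum>d'\<in>({d'\<in>D. vert d' = vert ?d} - {?d}). ?y d') + ?y (rv ?d)"
      unfolding img using fD ll dD0 by (subst sum.union_disjoint) auto
    also have "\<dots> = (\<Sum>d'\<in>{d'\<in>D. vert d' = vert ?d}. ?y d') - ?y ?d + ?y (rv ?d)"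
      using fD dD0 by (subst sum_diff1) auto
    finally show ?thesis .
  qed
  have "x \<in> eigenspace (adj_matrix E) 1 \<longleftrightarrow> (\<forall>i. (adj_matrix E *v x) $ i = x $ i)"
    unfolding eigenspace_def by (simp add: vec_eq_iff)
  also have "\<dots> \<longleftrightarrow> (\<forall>i. (\<Sum>d'\<in>{d'\<in>D. vert d' = vert (f i)}. ?y d') - ?y (f i) + ?y (rv (f i)) = ?y (f i))"
    using row nb hf by simp
  also have "\<dots> \<longleftrightarrow> (\<forall>d\<in>D. (\<Sum>d'\<in>{d'\<in>D. vert d' = vert d}. ?y d') - ?y d + ?y (rv d) = ?y d)"
  proof -
    have "D = range f" using f by (simp add: bij_betw_def)
    then show ?thesis by auto
  qed
  finally show ?thesis .
qed

lemma propagate: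
  fixes F :: "nat \<Rightarrow> real"
  assumes conn: "mg_connected VG D vert rv"
    and pr: "\<forall>d\<in>D. F (vert (rv d)) = F (vert d)"
    and u: "u \<in> VG" and v: "v \<in> VG"
  shows "F u = F v"
proof -
  have "(mg_adj D vert rv)\<^sup>*\<^sup>* u v" using conn u v unfolding mg_connected_def by blast
  then show ?thesis
  proof (induction rule: rtranclp_induct)
    case base then show ?case by simp
  next
    case (step y z)
    then obtain d where "d \<in> D" "vert d = y" "vert (rv d) = z" unfolding mg_adj_def by blast
    then show ?case using pr step.IH by auto
  qed
qed


lemma spectral:
  fixes E :: "'a::finite \<Rightarrow> 'a \<Rightarrow> bool"
  assumes cm: "cubic_multigraph VG D vert rv"
    and ll: "\<forall>d\<in>D. vert (rv d) \<noteq> vert d"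
    and conn: "mg_connected VG D vert rv"
    and f: "bij_betw f UNIV D"
    and iso: "\<forall>x y. E x y \<longleftrightarrow> trunc_adj D vert rv (f x) (f y)"
  shows "simple_eigenvalue (adj_matrix E) 1 \<longleftrightarrow> mg_bipartite VG D vert rv"
proof -
  let ?h = "inv_into UNIV f"
  have fD: "finite D" and dD: "\<And>d. d \<in> D \<Longrightarrow> vert d \<in> VG \<and> rv d \<in> D \<and> rv (rv d) = d \<and> rv d \<noteq> d"
    and c3: "\<And>v. v \<in> VG \<Longrightarrow> card {d\<in>D. vert d = v} = 3"
    using cm unfolding cubic_multigraph_def by auto
  have injf: "inj f" using f bij_betw_def by blast
  have fD': "f i \<in> D" for i using f bij_betwE by blast
  have hf: "?h (f i) = i" for i using injf by simp
  have fh: "d \<in> D \<Longrightarrow> f (?h d) = d" for d using f by (simp add: bij_betw_def f_inv_into_f)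
  have ev: "(\<forall>d\<in>D. S (vert (rv d)) = - S (vert d)) \<and> (\<forall>i. x $ i = S (vert (f i)) / 3)"
    if x: "x \<in> eigenspace (adj_matrix E) 1" and Sdef: "\<And>v. S v = (\<Sum>d\<in>{d\<in>D. vert d = v}. x $ ?h d)" for x S
  proof -
    have eq: "\<forall>d\<in>D. S (vert d) - x $ ?h d + x $ ?h (rv d) = x $ ?h d"
      using eig_char[OF cm ll f iso, of x] x Sdef by simp
    note k = key[OF cm ll eq Sdef]
    have "x $ i = S (vert (f i)) / 3" for i using k(2) fD'[of i] hf[of i] by auto
    then show ?thesis using k(1) by blast
  qed
  show ?thesis
  proof
    assume se: "simple_eigenvalue (adj_matrix E) 1"
    show "mg_bipartite VG D vert rv"
    proof (rule ccontr)
      assume nb: "\<not> mg_bipartite VG D vert rv"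
      have "eigenspace (adj_matrix E) 1 \<subseteq> {0}"
      proof
        fix x assume x: "x \<in> eigenspace (adj_matrix E) 1"
        define S where "S v = (\<Sum>d\<in>{d\<in>D. vert d = v}. x $ ?h d)" for v
        from ev[OF x, of S] have anti: "\<forall>d\<in>D. S (vert (rv d)) = - S (vert d)"
          and xi: "\<And>i. x $ i = S (vert (f i)) / 3" using S_def by auto
        have const: "\<bar>S u\<bar> = \<bar>S v\<bar>" if "u \<in> VG" "v \<in> VG" for u v
          by (rule propagate[OF conn _ that, of "\<lambda>v. \<bar>S v\<bar>"]) (simp add: anti)
        have z: "S (vert d) = 0" if d: "d \<in> D" for d
        proof (rule ccontr)
          assume nz: "S (vert d) \<noteq> 0"
          have nz': "S (vert d') \<noteq> 0" if "d' \<in> D" for d'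
          proof -
            have "\<bar>S (vert d')\<bar> = \<bar>S (vert d)\<bar>" using const dD[OF that] dD[OF d] by blast
            then show ?thesis using nz by auto
          qed
          have "(S (vert d') > 0) \<noteq> (S (vert (rv d')) > 0)" if "d' \<in> D" for d'
          proof -
            have "S (vert (rv d')) = - S (vert d')" using anti that by blast
            then show ?thesis using nz'[OF that] by linarith
          qed
          then have "mg_bipartite VG D vert rv" unfolding mg_bipartite_def by (intro exI[of _ "\<lambda>v. S v > 0"]) blast
          with nb show False by simp
        qed
        have "x = 0" unfolding vec_eq_iff using xi z fD' by simp
        then show "x \<in> {0}" by simp
      qed
      then have "dim (eigenspace (adj_matrix E) 1) = 0" by (simp add: dim_eq_0)
      with se show False unfolding simple_eigenvalue_def by simp
    qed
  next
    assume bip: "mg_bipartite VG D vert rv"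
    have "\<exists>c::nat\<Rightarrow>bool. \<forall>d\<in>D. c (vert d) \<noteq> c (vert (rv d))" using bip unfolding mg_bipartite_def .
    then obtain c :: "nat \<Rightarrow> bool" where c: "\<forall>d\<in>D. c (vert d) \<noteq> c (vert (rv d))" ..
    define \<sigma> where "\<sigma> v = (if c v then 1 else -1 :: real)" for v
    have s2: "\<sigma> v * \<sigma> v = 1" for v by (simp add: \<sigma>_def)
    have santi: "\<sigma> (vert (rv d)) = - \<sigma> (vert d)" if "d \<in> D" for d
    proof -
      have "c (vert d) \<noteq> c (vert (rv d))" using bspec[OF c that] .
      then show ?thesis unfolding \<sigma>_def by (cases "c (vert d)") auto
    qed
    define w :: "real^'a" where "w = (\<chi> i. \<sigma> (vert (f i)))"
    have w_nz: "w \<noteq> 0" by (simp add: vec_eq_iff w_def \<sigma>_def)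
    have w_ev: "w \<in> eigenspace (adj_matrix E) 1"
    proof -
      have wh: "w $ ?h d = \<sigma> (vert d)" if "d \<in> D" for d using fh[OF that] by (simp add: w_def)
      have "(\<Sum>d'\<in>{d'\<in>D. vert d' = vert d}. w $ ?h d') - w $ ?h d + w $ ?h (rv d) = w $ ?h d"
        if d: "d \<in> D" for d
      proof -
        have "(\<Sum>d'\<in>{d'\<in>D. vert d' = vert d}. w $ ?h d') = (\<Sum>d'\<in>{d'\<in>D. vert d' = vert d}. \<sigma> (vert d))"
          by (rule sum.cong) (auto simp: wh)
        also have "\<dots> = 3 * \<sigma> (vert d)" using c3 dD[OF d] by simp
        finally show ?thesis using wh[OF d] wh dD[OF d] santi[OF d] by simp
      qed
      then show ?thesis using eig_char[OF cm ll f iso, of w] by blast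
    qed
    have sub: "eigenspace (adj_matrix E) 1 \<subseteq> span {w}"
    proof
      fix x assume x: "x \<in> eigenspace (adj_matrix E) 1"
      define S where "S v = (\<Sum>d\<in>{d\<in>D. vert d = v}. x $ ?h d)" for v
      from ev[OF x, of S] have anti: "\<forall>d\<in>D. S (vert (rv d)) = - S (vert d)"
        and xi: "\<And>i. x $ i = S (vert (f i)) / 3" using S_def by auto
      define i0 :: 'a where "i0 = undefined"
      define k where "k = S (vert (f i0)) * \<sigma> (vert (f i0))"
      have const: "S u * \<sigma> u = S v * \<sigma> v" if "u \<in> VG" "v \<in> VG" for u v
        by (rule propagate[OF conn _ that, of "\<lambda>v. S v * \<sigma> v"]) (simp add: anti santi)
      have "S (vert (f i)) = k * \<sigma> (vert (f i))" for i
      proof -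
        have "S (vert (f i)) * \<sigma> (vert (f i)) = k" unfolding k_def
          using const[OF conjunct1[OF dD[OF fD']] conjunct1[OF dD[OF fD']]] by blast
        then have "S (vert (f i)) * \<sigma> (vert (f i)) * \<sigma> (vert (f i)) = k * \<sigma> (vert (f i))" by simp
        then show ?thesis by (simp add: mult.assoc s2)
      qed
      then have "x = (k / 3) *\<^sub>R w" unfolding vec_eq_iff using xi by (simp add: w_def)
      then show "x \<in> span {w}" unfolding span_singleton by blast
    qed
    have sup: "span {w} \<subseteq> eigenspace (adj_matrix E) 1"
      using w_ev unfolding span_singleton eigenspace_def by (auto simp: matrix_vector_mult_scaleR)
    have "eigenspace (adj_matrix E) 1 = span {w}" using sub sup by blast
    then show "simple_eigenvalue (adj_matrix E) 1"
      unfolding simple_eigenvalue_def using w_nz by (simp add: dim_span dim_singleton)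
  qed
qed


lemma card3_eq:
  assumes "card S = 3" "a \<in> S" "b \<in> S" "c \<in> S" "a \<noteq> b" "a \<noteq> c" "b \<noteq> c"
  shows "S = {a, b, c}"
proof -
  have fin: "finite S" using assms(1) card.infinite by fastforce
  have "{a,b,c} \<subseteq> S" using assms by auto
  moreover have "card {a,b,c} = card S" using assms by simp
  ultimately show ?thesis using card_subset_eq[OF fin] by metis
qed

definition Qv :: "('a \<Rightarrow> 'a \<Rightarrow> bool) \<Rightarrow> 'a \<Rightarrow> bool" where
  "Qv E v \<longleftrightarrow> (\<exists>a b c. a \<noteq> b \<and> a \<noteq> c \<and> b \<noteq> c \<and> {u. E v u} = {a,b,c} \<and> E a b \<and> \<not> E a c \<and> \<not> E b c)"

definition Kv :: "('a \<Rightarrow> 'a \<Rightarrow> bool) \<Rightarrow> 'a \<Rightarrow> bool" where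
  "Kv E v \<longleftrightarrow> (\<forall>a b. E v a \<longrightarrow> E v b \<longrightarrow> a \<noteq> b \<longrightarrow> E a b)"

lemma aut_nbrs:
  assumes "graph_automorphism E h"
  shows "{u. E (h v) u} = h ` {u. E v u}"
proof -
  have gd: "bij h \<and> (\<forall>x y. E x y \<longleftrightarrow> E (h x) (h y))" using assms unfolding graph_automorphism_def .
  have b: "bij h" using gd bij_is_inj by blast
  have e: "\<And>x y. E (h x) (h y) \<longleftrightarrow> E x y" using gd by blast
  show ?thesis
  proof
    show "{u. E (h v) u} \<subseteq> h ` {u. E v u}"
    proof
      fix u assume "u \<in> {u. E (h v) u}"
      moreover obtain u' where "u = h u'" using b by (metis bij_pointE)
      ultimately show "u \<in> h ` {u. E v u}" using e by auto
    qed
  qed (use e in auto)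
qed

lemma aut_Qv:
  assumes h: "graph_automorphism E h" and q: "Qv E v"
  shows "Qv E (h v)"
proof -
  have gd: "bij h \<and> (\<forall>x y. E x y \<longleftrightarrow> E (h x) (h y))" using h unfolding graph_automorphism_def .
  have b: "inj h" using gd bij_is_inj by blast
  have e: "\<And>x y. E (h x) (h y) \<longleftrightarrow> E x y" using gd by blast
  obtain a b c where abc: "a \<noteq> b" "a \<noteq> c" "b \<noteq> c" "{u. E v u} = {a,b,c}" "E a b" "\<not> E a c" "\<not> E b c"
    using q unfolding Qv_def by blast
  have "{u. E (h v) u} = {h a, h b, h c}" using aut_nbrs[OF h, of v] abc(4) by simp
  moreover have "h a \<noteq> h b" "h a \<noteq> h c" "h b \<noteq> h c" using abc b by (auto dest: injD)
  ultimately show ?thesis unfolding Qv_def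
    by (intro exI[of _ "h a"] exI[of _ "h b"] exI[of _ "h c"]) (simp add: abc e)
qed

lemma aut_Kv:
  assumes h: "graph_automorphism E h" and k: "Kv E v"
  shows "Kv E (h v)"
proof -
  have gd: "bij h \<and> (\<forall>x y. E x y \<longleftrightarrow> E (h x) (h y))" using h unfolding graph_automorphism_def .
  have b: "bij h" using gd bij_is_inj by blast
  have e: "\<And>x y. E (h x) (h y) \<longleftrightarrow> E x y" using gd by blast
  show ?thesis unfolding Kv_def
  proof (intro allI impI)
    fix a b assume ab: "E (h v) a" "E (h v) b" "a \<noteq> b"
    obtain a' where a': "a = h a'" using b by (metis bij_pointE)
    obtain b' where b': "b = h b'" using b by (metis bij_pointE)
    have "E a' b'" using k ab a' b' e unfolding Kv_def by metis
    then show "E a b" using a' b' e by simp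
  qed
qed

lemma Q_from_two:
  assumes sg: "simple_graph E" and c3: "\<forall>v. card {u. E v u} = 3"
    and N: "{u. E x u} = {y, z, w}" and d: "y \<noteq> z" "y \<noteq> w" "z \<noteq> w"
    and e: "E y z" "E y w" "\<not> E z w"
  shows "\<exists>v. Qv E v"
proof -
  have sym: "\<And>u v. E u v \<Longrightarrow> E v u" and irr: "\<And>v. \<not> E v v" using sg unfolding simple_graph_def by auto
  have "E x z" using N by auto
  then have xz: "E z x" by (rule sym)
  have zy: "E z y" using e(1) by (rule sym)
  have xy: "x \<noteq> y" "x \<noteq> z" "x \<noteq> w" using N irr by auto
  have "\<exists>t. t \<in> {u. E z u} \<and> t \<noteq> x \<and> t \<noteq> y"
  proof (rule ccontr)
    assume "\<not> ?thesis"
    then have "{u. E z u} \<subseteq> {x, y}" by blast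
    then have "card {u. E z u} \<le> card {x, y}" by (intro card_mono) auto
    also have "\<dots> \<le> 2" by (cases "x = y") auto
    finally show False using c3 by simp
  qed
  then obtain t where t: "E z t" "t \<noteq> x" "t \<noteq> y" by blast
  have tz: "t \<noteq> z" using t irr by auto
  have tw: "t \<noteq> w" using t e by auto
  have Nz: "{u. E z u} = {x, y, t}" using card3_eq[of "{u. E z u}" x y t] c3 xz zy t xy by auto
  have "E x y" using N by auto
  then have yx: "E y x" by (rule sym)
  have Ny: "{u. E y u} = {x, z, w}" using card3_eq[of "{u. E y u}" x z w] c3 yx e d xy by auto
  have "\<not> E x t" using N t tz tw by auto
  moreover have "\<not> E y t" using Ny t tz tw by auto
  moreover have "E x y" using N by auto
  ultimately have "Qv E z" unfolding Qv_def
    by (intro exI[of _ x] exI[of _ y] exI[of _ t]) (use Nz xy(1) t in auto)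
  then show ?thesis by blast
qed


lemma card3_with:
  assumes "card S = 3" "a \<in> S"
  shows "\<exists>b c. S = {a, b, c} \<and> a \<noteq> b \<and> a \<noteq> c \<and> b \<noteq> c"
proof -
  obtain x y z where S: "S = {x,y,z}" "x \<noteq> y" "y \<noteq> z" "x \<noteq> z" using assms(1) card_3_iff by metis
  have "a = x \<or> a = y \<or> a = z" using assms(2) S by auto
  then show ?thesis
  proof (elim disjE)
    assume "a = x" then show ?thesis using S by blast
  next
    assume "a = y" then show ?thesis using S by (intro exI[of _ x] exI[of _ z]) auto
  next
    assume "a = z" then show ?thesis using S by (intro exI[of _ x] exI[of _ y]) auto
  qed
qed

lemma tri_cases:
  assumes sg: "simple_graph E" and c3: "\<forall>v. card {u. E v u} = 3" and ht: "has_triangle E"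
  shows "(\<exists>v. Kv E v) \<or> (\<exists>v. Qv E v)"
proof -
  have sym: "\<And>u v. E u v \<Longrightarrow> E v u" and irr: "\<And>v. \<not> E v v" using sg unfolding simple_graph_def by auto
  obtain a b c where abc: "a \<noteq> b" "b \<noteq> c" "a \<noteq> c" "E a b" "E b c" "E c a" using ht unfolding has_triangle_def by blast
  have ac: "E a c" using abc(6) by (rule sym)
  have cb: "E c b" using abc(5) by (rule sym)
  obtain b' w where bw: "{u. E a u} = {b, b', w}" "b \<noteq> b'" "b \<noteq> w" "b' \<noteq> w"
    using card3_with[of "{u. E a u}" b] c3 abc(4) by auto
  have "c \<in> {b, b', w}" using ac bw(1) by blast
  then have "c = b' \<or> c = w" using abc(2) by blast
  then have "\<exists>w'. {u. E a u} = {b, c, w'} \<and> b \<noteq> w' \<and> c \<noteq> w'"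
  proof
    assume "c = b'" then show ?thesis using bw by blast
  next
    assume cw: "c = w"
    have "{u. E a u} = {b, c, b'}" using bw(1) cw by (simp add: insert_commute)
    then show ?thesis using bw cw by blast
  qed
  then obtain w' where N: "{u. E a u} = {b, c, w'}" "b \<noteq> w'" "c \<noteq> w'" by blast
  have aw: "E a w'" using N by auto
  have wa: "w' \<noteq> a" using aw irr by auto
  consider (both) "E b w'" "E c w'" | (none) "\<not> E b w'" "\<not> E c w'" | (b) "E b w'" "\<not> E c w'" | (c) "\<not> E b w'" "E c w'" by blast
  then show ?thesis
  proof cases
    case both
    have "Kv E a" unfolding Kv_def
    proof (intro allI impI)
      fix p q assume pq: "E a p" "E a q" "p \<noteq> q"
      have p: "p = b \<or> p = c \<or> p = w'" using pq(1) N(1) by blast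
      have q: "q = b \<or> q = c \<or> q = w'" using pq(2) N(1) by blast
      have wb: "E w' b" using both(1) by (rule sym)
      have wc: "E w' c" using both(2) by (rule sym)
      show "E p q" using p q pq(3) abc(5) cb both wb wc by blast
    qed
    then show ?thesis by blast
  next
    case none
    have "b \<noteq> c \<and> b \<noteq> w' \<and> c \<noteq> w' \<and> {u. E a u} = {b,c,w'} \<and> E b c \<and> \<not> E b w' \<and> \<not> E c w'"
      using abc(2) N(2) N(3) N(1) abc(5) none by simp
    then have "Qv E a" unfolding Qv_def by blast
    then show ?thesis by blast
  next
    case b
    show ?thesis using Q_from_two[OF sg c3 N(1) abc(2) N(2) N(3) abc(5) b(1) b(2)] by blast
  next
    case c
    have N': "{u. E a u} = {c, b, w'}" using N(1) by (simp add: insert_commute)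
    show ?thesis using Q_from_two[OF sg c3 N' abc(2)[symmetric] N(3) N(2) cb c(2) c(1)] by blast
  qed
qed

lemma row:
  fixes E :: "'a::finite \<Rightarrow> 'a \<Rightarrow> bool"
  shows "(adj_matrix E *v x) $ i = (\<Sum>j\<in>{j. E i j}. x $ j)"
proof -
  have "(adj_matrix E *v x) $ i = (\<Sum>j\<in>UNIV. (if E i j then 1 else 0) * x $ j)"
    by (simp add: matrix_vector_mult_def adj_matrix_def)
  also have "\<dots> = (\<Sum>j\<in>UNIV. if E i j then x $ j else 0)" by (rule sum.cong) auto
  also have "\<dots> = (\<Sum>j\<in>{j. E i j}. x $ j)" by (simp add: sum.If_cases)
  finally show ?thesis .
qed

lemma propX:
  assumes conn: "connected_graph E" and pr: "\<And>u v. E u v \<Longrightarrow> F u = F v"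
  shows "F u = F v"
proof -
  have "E\<^sup>*\<^sup>* u v" using conn unfolding connected_graph_def by blast
  then show ?thesis
  proof (induction rule: rtranclp_induct)
    case base then show ?case by simp
  next
    case (step y z) then show ?case using pr[of y z] by simp
  qed
qed

lemma K_eigen:
  fixes E :: "'a::finite \<Rightarrow> 'a \<Rightarrow> bool"
  assumes cg: "cubic_graph E" and conn: "connected_graph E" and K: "\<forall>v. Kv E v"
  shows "eigenspace (adj_matrix E) 1 \<subseteq> {0}"
proof
  fix x assume x: "x \<in> eigenspace (adj_matrix E) 1"
  have sg: "simple_graph E" and c3: "\<And>v. card {u. E v u} = 3" using cg unfolding cubic_graph_def by auto
  have sym: "\<And>u v. E u v \<Longrightarrow> E v u" and irr: "\<And>v. \<not> E v v" using sg unfolding simple_graph_def by auto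
  have ev: "(\<Sum>j\<in>{j. E i j}. x $ j) = x $ i" for i
    using x row[of E x i] unfolding eigenspace_def by (simp add: vec_eq_iff)
  have edge: "x $ u = x $ v" if uv: "E u v" for u v
  proof -
    obtain b c where N: "{w. E u w} = {v, b, c}" "v \<noteq> b" "v \<noteq> c" "b \<noteq> c"
      using card3_with[of "{w. E u w}" v] c3 uv by auto
    have ub: "E u b" and uc: "E u c" using N by auto
    have vb: "E v b" using K uv ub N(2) unfolding Kv_def by blast
    have vc: "E v c" using K uv uc N(3) unfolding Kv_def by blast
    have vu: "E v u" using uv by (rule sym)
    have ub': "u \<noteq> b" "u \<noteq> c" using ub uc irr by auto
    have Nv: "{w. E v w} = {u, b, c}" using card3_eq[of "{w. E v w}" u b c] c3 vu vb vc ub' N(4) by auto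
    have "x $ v + x $ b + x $ c = x $ u" using ev[of u] N by simp
    moreover have "x $ u + x $ b + x $ c = x $ v" using ev[of v] Nv ub' N(4) by simp
    ultimately show ?thesis by linarith
  qed
  define i0 :: 'a where "i0 = undefined"
  have const: "x $ v = x $ i0" for v by (rule propX[OF conn edge])
  obtain a b c where N: "{w. E i0 w} = {a, b, c}" "a \<noteq> b" "b \<noteq> c" "a \<noteq> c"
    using c3[of i0] card_3_iff by metis
  have "x $ a + x $ b + x $ c = x $ i0" using ev[of i0] N by simp
  then have "x $ i0 = 0" using const[of a] const[of b] const[of c] by linarith
  then have "x = 0" using const by (simp add: vec_eq_iff)
  then show "x \<in> {0}" by simp
qed


definition tri :: "('a \<Rightarrow> 'a \<Rightarrow> bool) \<Rightarrow> 'a \<Rightarrow> 'a set" where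
  "tri E v = {u. u = v \<or> (E v u \<and> (\<exists>w. E v w \<and> E u w))}"

definition outn :: "('a \<Rightarrow> 'a \<Rightarrow> bool) \<Rightarrow> 'a \<Rightarrow> 'a" where
  "outn E v = (SOME u. E v u \<and> u \<notin> tri E v)"

lemma tri_Q:
  assumes sg: "simple_graph E" and q: "Qv E v"
  shows "\<exists>a b c. a \<noteq> b \<and> a \<noteq> c \<and> b \<noteq> c \<and> {u. E v u} = {a,b,c} \<and> tri E v = {v,a,b}
     \<and> c \<notin> tri E v \<and> v \<noteq> a \<and> v \<noteq> b \<and> v \<noteq> c"
proof -
  have sym: "\<And>u v. E u v \<Longrightarrow> E v u" and irr: "\<And>v. \<not> E v v" using sg unfolding simple_graph_def by auto
  obtain a b c where abc: "a \<noteq> b" "a \<noteq> c" "b \<noteq> c" "{u. E v u} = {a,b,c}" "E a b" "\<not> E a c" "\<not> E b c"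
    using q unfolding Qv_def by blast
  have va: "E v a" and vb: "E v b" and vc: "E v c" using abc(4) by auto
  have ca: "\<not> E c a"
  proof
    assume "E c a" then have "E a c" by (rule sym) with abc(6) show False by simp
  qed
  have cb: "\<not> E c b"
  proof
    assume "E c b" then have "E b c" by (rule sym) with abc(7) show False by simp
  qed
  have ba: "E b a" using abc(5) by (rule sym)
  have vne: "v \<noteq> a" "v \<noteq> b" "v \<noteq> c" using va vb vc irr by auto
  have cnot: "c \<notin> tri E v"
  proof
    assume "c \<in> tri E v"
    then obtain w where w: "E v w" "E c w" using vne(3) unfolding tri_def by auto
    have "w \<in> {a,b,c}" using w(1) abc(4) by blast
    then show False using w(2) ca cb irr by auto
  qed
  have "tri E v = {v,a,b}"
  proof
    show "{v,a,b} \<subseteq> tri E v" unfolding tri_def using va vb abc(5) ba by blast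
  next
    show "tri E v \<subseteq> {v,a,b}"
    proof
      fix u assume u: "u \<in> tri E v"
      show "u \<in> {v,a,b}"
      proof (cases "u = v")
        case False
        then have "E v u" using u unfolding tri_def by blast
        then have "u \<in> {a,b,c}" using abc(4) by blast
        moreover have "u \<noteq> c" using u cnot by blast
        ultimately show ?thesis by blast
      qed simp
    qed
  qed
  then show ?thesis using abc(1-4) cnot vne by blast
qed

locale qgraph =
  fixes E :: "'a \<Rightarrow> 'a \<Rightarrow> bool"
  assumes sg: "simple_graph E" and allQ: "\<And>v. Qv E v"
begin

lemma sym: "E u v \<Longrightarrow> E v u" using sg unfolding simple_graph_def by auto
lemma irr: "\<not> E v v" using sg unfolding simple_graph_def by auto

lemma tri_self: "v \<in> tri E v" unfolding tri_def by simp

lemma tri_card: "card (tri E v) = 3"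
proof -
  obtain a b c where "a \<noteq> b" "tri E v = {v,a,b}" "v \<noteq> a" "v \<noteq> b"
    using tri_Q[OF sg allQ[of v]] by blast
  then show ?thesis by simp
qed

lemma tri_eq: assumes u: "u \<in> tri E v" shows "tri E u = tri E v"
proof (cases "u = v")
  case False
  then have vu: "E v u" and "\<exists>w. E v w \<and> E u w" using u unfolding tri_def by auto
  then obtain w where w: "E v w" "E u w" by blast
  have uv: "E u v" using vu by (rule sym)
  have wv: "E w v" using w(1) by (rule sym)
  have wu: "E w u" using w(2) by (rule sym)
  have d: "u \<noteq> v" "w \<noteq> v" "w \<noteq> u" using False w irr by auto
  have "v \<in> tri E u" unfolding tri_def using uv w by blast
  moreover have "w \<in> tri E u" unfolding tri_def using w(2) uv wv by blast
  ultimately have tu: "tri E u = {u, v, w}" using card3_eq[OF tri_card tri_self] d by auto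
  have "w \<in> tri E v" unfolding tri_def using w(1) vu wu by blast
  then have tv: "tri E v = {v, u, w}" using card3_eq[OF tri_card tri_self u] d by auto
  show ?thesis using tu tv by (simp add: insert_commute)
qed simp

lemma tri_eq_iff: "tri E u = tri E v \<longleftrightarrow> u \<in> tri E v"
  using tri_eq tri_self by metis

lemma outn: "E v (outn E v)" "outn E v \<notin> tri E v"
proof -
  obtain a b c where "{u. E v u} = {a,b,c}" "c \<notin> tri E v"
    using tri_Q[OF sg allQ[of v]] by blast
  then have "\<exists>u. E v u \<and> u \<notin> tri E v" by auto
  then have "E v (outn E v) \<and> outn E v \<notin> tri E v" unfolding outn_def by (rule someI_ex)
  then show "E v (outn E v)" "outn E v \<notin> tri E v" by auto
qed

lemma nbr_cases: assumes "E v u" shows "u \<in> tri E v \<or> u = outn E v"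
proof -
  obtain a b c where abc: "{u. E v u} = {a,b,c}" "tri E v = {v,a,b}" "c \<notin> tri E v"
    using tri_Q[OF sg allQ[of v]] by blast
  have "outn E v \<in> {a,b,c}" using outn(1)[of v] abc(1) by blast
  then have oc: "outn E v = c" using outn(2)[of v] abc(2) by auto
  have "u \<in> {a,b,c}" using assms abc(1) by blast
  then show ?thesis using oc abc(2) by auto
qed

lemma adj_iff: "E v u \<longleftrightarrow> (u \<in> tri E v \<and> u \<noteq> v) \<or> u = outn E v"
proof
  assume "E v u" then show "(u \<in> tri E v \<and> u \<noteq> v) \<or> u = outn E v" using nbr_cases irr by blast
next
  assume "(u \<in> tri E v \<and> u \<noteq> v) \<or> u = outn E v"
  then show "E v u" using outn(1) unfolding tri_def by blast
qed

lemma outn_ne: "outn E v \<noteq> v" using outn(1)[of v] irr by auto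

lemma outn_outn: "outn E (outn E v) = v"
proof -
  let ?c = "outn E v"
  have cv: "E ?c v" using outn(1) by (rule sym)
  have "v \<notin> tri E ?c"
  proof
    assume "v \<in> tri E ?c"
    then have "tri E v = tri E ?c" by (rule tri_eq)
    then have "?c \<in> tri E v" using tri_self by simp
    then show False using outn(2) by simp
  qed
  then show ?thesis using nbr_cases[OF cv] by simp
qed

lemma aut_tri:
  assumes h: "graph_automorphism E h"
  shows "tri E (h v) = h ` tri E v"
proof -
  have gd: "bij h \<and> (\<forall>x y. E x y \<longleftrightarrow> E (h x) (h y))" using h unfolding graph_automorphism_def .
  have b: "bij h" using gd by blast
  have inj: "inj h" using b bij_is_inj by blast
  have e: "\<And>x y. E (h x) (h y) \<longleftrightarrow> E x y" using gd by blast
  have sj: "\<exists>u'. u = h u'" for u using b by (metis bij_pointE)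
  show ?thesis
  proof
    show "tri E (h v) \<subseteq> h ` tri E v"
    proof
      fix u assume u: "u \<in> tri E (h v)"
      obtain u' where u': "u = h u'" using sj by blast
      have "u' \<in> tri E v"
      proof (cases "u = h v")
        case True then have "u' = v" using u' inj by (auto dest: injD)
        then show ?thesis by (simp add: tri_self)
      next
        case False
        then obtain w where w: "E (h v) u" "E (h v) w" "E u w" using u unfolding tri_def by auto
        obtain w' where w': "w = h w'" using sj by blast
        have "E v u'" "E v w'" "E u' w'" using w u' w' e by auto
        then show ?thesis unfolding tri_def by blast
      qed
      then show "u \<in> h ` tri E v" using u' by blast
    qed
  next
    show "h ` tri E v \<subseteq> tri E (h v)"
    proof
      fix u assume "u \<in> h ` tri E v"
      then obtain u' where u': "u = h u'" "u' \<in> tri E v" by blast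
      show "u \<in> tri E (h v)"
      proof (cases "u' = v")
        case True then show ?thesis using u' by (simp add: tri_self)
      next
        case False
        then obtain w where w: "E v u'" "E v w" "E u' w" using u'(2) unfolding tri_def by auto
        have "E (h v) (h u')" "E (h v) (h w)" "E (h u') (h w)" using w e by auto
        then show ?thesis unfolding tri_def using u'(1) by blast
      qed
    qed
  qed
qed

lemma aut_outn:
  assumes h: "graph_automorphism E h"
  shows "outn E (h v) = h (outn E v)"
proof -
  have gd: "bij h \<and> (\<forall>x y. E x y \<longleftrightarrow> E (h x) (h y))" using h unfolding graph_automorphism_def .
  have inj: "inj h" using gd bij_is_inj by blast
  have e: "\<And>x y. E (h x) (h y) \<longleftrightarrow> E x y" using gd by blast
  have "E (h v) (h (outn E v))" using e outn(1) by simp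
  moreover have "h (outn E v) \<notin> tri E (h v)"
  proof
    assume "h (outn E v) \<in> tri E (h v)"
    then have "h (outn E v) \<in> h ` tri E v" using aut_tri[OF h] by simp
    then have "outn E v \<in> tri E v" using inj by (auto dest: injD)
    then show False using outn(2) by simp
  qed
  ultimately show ?thesis using nbr_cases by metis
qed

end


lemma construct:
  fixes E :: "'a::finite \<Rightarrow> 'a \<Rightarrow> bool"
  assumes qg: "qgraph E" and conn: "connected_graph E" and vt: "vertex_transitive E"
  shows "\<exists>VG D vert rv. cubic_multigraph VG D vert rv \<and> (\<forall>d\<in>D. vert (rv d) \<noteq> vert d) \<and>
     mg_connected VG D vert rv \<and> mg_arc_transitive VG D vert rv \<and> iso_to_truncation E D vert rv"
proof -
  interpret qgraph E by (rule qg)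
  define vtx where "vtx v = Min (to_nat ` tri E v)" for v :: 'a
  define D where "D = range (to_nat :: 'a \<Rightarrow> nat)"
  define vert where "vert d = vtx (from_nat d :: 'a)" for d
  define rv where "rv d = to_nat (outn E (from_nat d :: 'a))" for d
  define VG where "VG = vert ` D"
  have finD: "finite D" unfolding D_def by simp
  have Dto: "d \<in> D \<Longrightarrow> to_nat (from_nat d :: 'a) = d" for d unfolding D_def by auto
  have vert_to: "vert (to_nat p) = vtx p" for p :: 'a unfolding vert_def by simp
  have rv_to: "rv (to_nat p) = to_nat (outn E p)" for p :: 'a unfolding rv_def by simp
  have F1: "\<exists>s\<in>tri E v. vtx v = to_nat s" for v
  proof -
    have "finite (to_nat ` tri E v)" by simp
    moreover have "to_nat ` tri E v \<noteq> {}" using tri_self by blast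
    ultimately have "vtx v \<in> to_nat ` tri E v" unfolding vtx_def by (rule Min_in)
    then show ?thesis by blast
  qed
  have F2: "vtx u = vtx v \<longleftrightarrow> tri E u = tri E v" for u v
  proof
    assume eq: "vtx u = vtx v"
    obtain p where p: "p \<in> tri E u" "vtx u = to_nat p" using F1 by blast
    obtain q where q: "q \<in> tri E v" "vtx v = to_nat q" using F1 by blast
    have "p = q" using eq p q by (simp add: injD[OF inj_to_nat])
    then show "tri E u = tri E v" using tri_eq p q by metis
  qed (simp add: vtx_def)
  have F3: "vtx u = vtx v \<longleftrightarrow> u \<in> tri E v" for u v using F2 tri_eq_iff by simp
  have allD: "\<And>P. (\<forall>d\<in>D. P d) \<longleftrightarrow> (\<forall>p::'a. P (to_nat p))" unfolding D_def by simp
  have cm: "cubic_multigraph VG D vert rv"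
    unfolding cubic_multigraph_def
  proof (intro conjI)
    show "finite VG" unfolding VG_def using finD by simp
    show "finite D" by (rule finD)
    show "\<forall>d\<in>D. vert d \<in> VG \<and> rv d \<in> D \<and> rv (rv d) = d \<and> rv d \<noteq> d"
      unfolding allD
    proof
      fix p :: 'a
      have "vert (to_nat p) \<in> VG" unfolding VG_def D_def by simp
      moreover have "rv (to_nat p) \<in> D" unfolding D_def rv_def by simp
      moreover have "rv (rv (to_nat p)) = to_nat p" by (simp add: rv_to outn_outn)
      moreover have "rv (to_nat p) \<noteq> to_nat p" using outn_ne[of p] by (simp add: rv_to)
      ultimately show "vert (to_nat p) \<in> VG \<and> rv (to_nat p) \<in> D \<and> rv (rv (to_nat p)) = to_nat p \<and> rv (to_nat p) \<noteq> to_nat p"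
        by blast
    qed
    show "\<forall>v\<in>VG. card {d\<in>D. vert d = v} = 3"
    proof
      fix v assume "v \<in> VG"
      then obtain p :: 'a where v: "v = vtx p" unfolding VG_def D_def vert_def by auto
      have "{d\<in>D. vert d = v} = to_nat ` tri E p"
      proof
        show "{d\<in>D. vert d = v} \<subseteq> to_nat ` tri E p"
        proof
          fix d assume "d \<in> {d\<in>D. vert d = v}"
          then obtain q :: 'a where q: "d = to_nat q" "vtx q = vtx p" unfolding D_def v by (auto simp: vert_to)
          then show "d \<in> to_nat ` tri E p" using F3 by blast
        qed
      next
        show "to_nat ` tri E p \<subseteq> {d\<in>D. vert d = v}"
          using F3 unfolding D_def v by (auto simp: vert_to)
      qed
      then show "card {d\<in>D. vert d = v} = 3"
        by (simp add: card_image[OF inj_on_subset[OF inj_to_nat]] tri_card)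
    qed
  qed
  have ll: "\<forall>d\<in>D. vert (rv d) \<noteq> vert d"
    unfolding allD
  proof
    fix p :: 'a
    show "vert (rv (to_nat p)) \<noteq> vert (to_nat p)"
      using outn(2)[of p] F3[of "outn E p" p] by (simp add: rv_to vert_to)
  qed
  have iso: "iso_to_truncation E D vert rv"
    unfolding iso_to_truncation_def
  proof (intro exI[of _ "to_nat :: 'a \<Rightarrow> nat"] conjI allI)
    show "bij_betw (to_nat :: 'a \<Rightarrow> nat) UNIV D" unfolding D_def by (simp add: bij_betw_def)
    fix x y :: 'a
    have "trunc_adj D vert rv (to_nat x) (to_nat y) \<longleftrightarrow> (x \<noteq> y \<and> vtx x = vtx y) \<or> y = outn E x"
      unfolding trunc_adj_def D_def by (auto simp: vert_to rv_to injD[OF inj_to_nat])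
    also have "\<dots> \<longleftrightarrow> (y \<in> tri E x \<and> y \<noteq> x) \<or> y = outn E x" using F3[of y x] F2[of x y] F2[of y x] by auto
    also have "\<dots> \<longleftrightarrow> E x y" using adj_iff by simp
    finally show "E x y \<longleftrightarrow> trunc_adj D vert rv (to_nat x) (to_nat y)" by simp
  qed
  have mconn: "mg_connected VG D vert rv"
    unfolding mg_connected_def
  proof (intro ballI)
    fix u v assume "u \<in> VG" "v \<in> VG"
    then obtain p q :: 'a where u: "u = vtx p" and v: "v = vtx q" unfolding VG_def D_def vert_def by auto
    have "E\<^sup>*\<^sup>* p q" using conn unfolding connected_graph_def by blast
    then have "(mg_adj D vert rv)\<^sup>*\<^sup>* (vtx p) (vtx q)"
    proof (induction rule: rtranclp_induct)
      case base then show ?case by simp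
    next
      case (step y z)
      from nbr_cases[OF step.hyps(2)] show ?case
      proof
        assume "z \<in> tri E y"
        then have "vtx z = vtx y" using F3 by blast
        then show ?thesis using step.IH by simp
      next
        assume z: "z = outn E y"
        have "mg_adj D vert rv (vtx y) (vtx z)" unfolding mg_adj_def D_def
          by (rule bexI[of _ "to_nat y"]) (simp_all add: vert_to rv_to z)
        then show ?thesis using step.IH by simp
      qed
    qed
    then show "(mg_adj D vert rv)\<^sup>*\<^sup>* u v" using u v by simp
  qed
  have arc: "mg_arc_transitive VG D vert rv"
    unfolding mg_arc_transitive_def
  proof (intro ballI)
    fix d d' assume dD: "d \<in> D" and dD': "d' \<in> D"
    then obtain p q :: 'a where p: "d = to_nat p" and q: "d' = to_nat q" unfolding D_def by auto
    obtain h where h: "graph_automorphism E h" "h p = q" using vt unfolding vertex_transitive_def by blast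
    have injh: "inj h" using h(1) unfolding graph_automorphism_def bij_def by blast
    define \<psi> where "\<psi> d = to_nat (h (from_nat d))" for d
    define \<phi> where "\<phi> u = vtx (h (from_nat u))" for u
    have psi_to: "\<psi> (to_nat r) = to_nat (h r)" for r unfolding \<psi>_def by simp
    have VGr: "\<And>u. u \<in> VG \<Longrightarrow> \<exists>r. u = vtx r \<and> from_nat u \<in> tri E r"
    proof -
      fix u assume "u \<in> VG"
      then obtain r :: 'a where u: "u = vtx r" unfolding VG_def D_def vert_def by auto
      obtain s where s: "s \<in> tri E r" "vtx r = to_nat s" using F1 by blast
      then have "(from_nat u :: 'a) = s" using u by simp
      then have "u = vtx r \<and> (from_nat u :: 'a) \<in> tri E r" using u s by simp
      then show "\<exists>r. u = vtx r \<and> from_nat u \<in> tri E r" by blast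
    qed
    have key: "vtx (h (from_nat (vtx r))) = vtx (h r)" for r
    proof -
      obtain s where s: "s \<in> tri E r" "vtx r = to_nat s" using F1 by blast
      have "tri E (h s) = tri E (h r)" using aut_tri[OF h(1)] tri_eq[OF s(1)] by simp
      then show ?thesis using s(2) F2 by simp
    qed
    have bpsi: "bij_betw \<psi> D D"
    proof -
      have "inj_on \<psi> D"
      proof
        fix x y assume "x \<in> D" "y \<in> D" "\<psi> x = \<psi> y"
        then obtain x' y' :: 'a where "x = to_nat x'" "y = to_nat y'" "to_nat (h x') = to_nat (h y')"
          unfolding D_def by (auto simp: psi_to)
        then show "x = y" using injh by (auto dest: injD)
      qed
      moreover have "\<psi> ` D \<subseteq> D" unfolding \<psi>_def D_def by auto
      ultimately show ?thesis using endo_inj_surj[OF finD] unfolding bij_betw_def by blast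
    qed
    have bphi: "bij_betw \<phi> VG VG"
    proof -
      have finVG: "finite VG" unfolding VG_def using finD by simp
      have "inj_on \<phi> VG"
      proof
        fix x y assume x: "x \<in> VG" and y: "y \<in> VG" and e: "\<phi> x = \<phi> y"
        obtain rx where rx: "x = vtx rx" "from_nat x \<in> tri E rx" using VGr[OF x] by blast
        obtain ry where ry: "y = vtx ry" "from_nat y \<in> tri E ry" using VGr[OF y] by blast
        have "tri E (h (from_nat x)) = tri E (h (from_nat y))" using e F2 unfolding \<phi>_def by blast
        then have "h ` tri E (from_nat x) = h ` tri E (from_nat y)" using aut_tri[OF h(1)] by simp
        then have "tri E (from_nat x) = tri E (from_nat y)" using injh by (simp add: inj_image_eq_iff)
        then have "tri E rx = tri E ry" using tri_eq rx(2) ry(2) by metis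
        then show "x = y" using rx(1) ry(1) F2 by simp
      qed
      moreover have "\<phi> ` VG \<subseteq> VG"
      proof
        fix y assume "y \<in> \<phi> ` VG"
        then obtain u where "y = vtx (h (from_nat u))" unfolding \<phi>_def by blast
        then have "y = vert (to_nat (h (from_nat u)))" by (simp add: vert_to)
        then show "y \<in> VG" unfolding VG_def D_def by blast
      qed
      ultimately show ?thesis using endo_inj_surj[OF finVG] unfolding bij_betw_def by blast
    qed
    have compat: "\<forall>e\<in>D. vert (\<psi> e) = \<phi> (vert e) \<and> \<psi> (rv e) = rv (\<psi> e)"
      unfolding allD
    proof
      fix r :: 'a
      have "vert (\<psi> (to_nat r)) = vtx (h r)" by (simp add: psi_to vert_to)
      moreover have "\<phi> (vert (to_nat r)) = vtx (h r)" unfolding \<phi>_def by (simp add: vert_to key)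
      moreover have "\<psi> (rv (to_nat r)) = rv (\<psi> (to_nat r))"
        by (simp add: psi_to rv_to aut_outn[OF h(1)])
      ultimately show "vert (\<psi> (to_nat r)) = \<phi> (vert (to_nat r)) \<and> \<psi> (rv (to_nat r)) = rv (\<psi> (to_nat r))"
        by simp
    qed
    have "mg_automorphism VG D vert rv \<phi> \<psi>" unfolding mg_automorphism_def using bpsi bphi compat by blast
    moreover have "\<psi> d = d'" using p q h(2) by (simp add: psi_to)
    ultimately show "\<exists>\<phi> \<psi>. mg_automorphism VG D vert rv \<phi> \<psi> \<and> \<psi> d = d'" by blast
  qed
  show ?thesis using cm ll mconn arc iso by blast
qed


theorem corollary6p4:
  fixes E :: "'a::finite \<Rightarrow> 'a \<Rightarrow> bool"
  assumes "cubic_graph E"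
    and "connected_graph E"
    and "vertex_transitive E"
    and "has_triangle E"
  shows "simple_eigenvalue (adj_matrix E) 1 \<longleftrightarrow>
    (\<exists>VG D vert rv. cubic_multigraph VG D vert rv \<and> mg_connected VG D vert rv \<and>
        mg_bipartite VG D vert rv \<and> mg_arc_transitive VG D vert rv \<and>
        iso_to_truncation E D vert rv)"
proof -
  have sg: "simple_graph E" and c3: "\<forall>v. card {u. E v u} = 3" using assms(1) unfolding cubic_graph_def by auto
  have transfer: "\<forall>v. P v" if P: "P v0" and pres: "\<And>h v. graph_automorphism E h \<Longrightarrow> P v \<Longrightarrow> P (h v)" for P v0
  proof
    fix v
    obtain h where "graph_automorphism E h" "h v0 = v" using assms(3) unfolding vertex_transitive_def by blast
    then show "P v" using pres[of h v0] P by simp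
  qed
  show ?thesis
  proof
    assume se: "simple_eigenvalue (adj_matrix E) 1"
    have notK: "\<not> (\<exists>v. Kv E v)"
    proof
      assume "\<exists>v. Kv E v"
      then obtain v0 where k0: "Kv E v0" by blast
      have "\<forall>v. Kv E v" 
      proof (rule transfer[of "Kv E" v0])
        show "Kv E v0" by (rule k0)
      next
        fix h v assume "graph_automorphism E h" "Kv E v"
        then show "Kv E (h v)" by (rule aut_Kv)
      qed
      then have "eigenspace (adj_matrix E) 1 \<subseteq> {0}" using K_eigen[OF assms(1) assms(2)] by blast
      then have "dim (eigenspace (adj_matrix E) 1) = 0" by (simp add: dim_eq_0)
      with se show False unfolding simple_eigenvalue_def by simp
    qed
    then obtain v0 where q0: "Qv E v0" using tri_cases[OF sg c3 assms(4)] by blast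
    have "\<forall>v. Qv E v" 
      proof (rule transfer[of "Qv E" v0])
        show "Qv E v0" by (rule q0)
      next
        fix h v assume "graph_automorphism E h" "Qv E v"
        then show "Qv E (h v)" by (rule aut_Qv)
      qed
    then have qg: "qgraph E" using sg by unfold_locales auto
    obtain VG D vert rv where cm: "cubic_multigraph VG D vert rv" and ll: "\<forall>d\<in>D. vert (rv d) \<noteq> vert d"
      and mc: "mg_connected VG D vert rv" and arc: "mg_arc_transitive VG D vert rv"
      and iso: "iso_to_truncation E D vert rv"
      using construct[OF qg assms(2) assms(3)] by blast
    obtain f where f: "bij_betw f UNIV D" and fi: "\<forall>x y. E x y \<longleftrightarrow> trunc_adj D vert rv (f x) (f y)"
      using iso unfolding iso_to_truncation_def by blast
    have "mg_bipartite VG D vert rv" using spectral[OF cm ll mc f fi] se by simp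
    then show "\<exists>VG D vert rv. cubic_multigraph VG D vert rv \<and> mg_connected VG D vert rv \<and>
        mg_bipartite VG D vert rv \<and> mg_arc_transitive VG D vert rv \<and> iso_to_truncation E D vert rv"
      using cm mc arc iso by blast
  next
    assume "\<exists>VG D vert rv. cubic_multigraph VG D vert rv \<and> mg_connected VG D vert rv \<and>
        mg_bipartite VG D vert rv \<and> mg_arc_transitive VG D vert rv \<and> iso_to_truncation E D vert rv"
    then obtain VG D vert rv where cm: "cubic_multigraph VG D vert rv" and mc: "mg_connected VG D vert rv"
      and bip: "mg_bipartite VG D vert rv" and iso: "iso_to_truncation E D vert rv" by blast
    have ll: "\<forall>d\<in>D. vert (rv d) \<noteq> vert d"
    proof
      fix d assume d: "d \<in> D"
      have "\<exists>c::nat\<Rightarrow>bool. \<forall>d\<in>D. c (vert d) \<noteq> c (vert (rv d))" using bip unfolding mg_bipartite_def .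
      then obtain c :: "nat \<Rightarrow> bool" where c: "\<forall>d\<in>D. c (vert d) \<noteq> c (vert (rv d))" ..
      have "c (vert d) \<noteq> c (vert (rv d))" using bspec[OF c d] .
      then show "vert (rv d) \<noteq> vert d" by metis
    qed
    obtain f where f: "bij_betw f UNIV D" and fi: "\<forall>x y. E x y \<longleftrightarrow> trunc_adj D vert rv (f x) (f y)"
      using iso unfolding iso_to_truncation_def by blast
    show "simple_eigenvalue (adj_matrix E) 1" using spectral[OF cm ll mc f fi] bip by simp
  qed
qed

end
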